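(* Let $M$ be an $n\times d$ matrix (a database). For every nonempty subset of columns $J\subseteq[d]$, every family of thresholds $\{t_j\}_{j\in J}\subseteq[0,1]$, and every $j^\star\in J$, \[ Q_J\Big(\prod_{j\in J} t_j\Big)\;\le\;\sum_{j\in J} Q_j(t_j)\;+\;\sum_{j\in J\setminus\{j^\star\}} t_j\,|V_j| . \]
   Context: $M$ has $n$ rows (users) and $d$ columns (features); $M_{ij}$ is the value of feature $j$ for user $i$. For a column $j$, $V_j=\{M_{ij}: i\in[n]\}$, and for $J\subseteq[d]$, $V_J=\prod_{j\in J}V_j$ (Cartesian product). The empirical joint distribution of the columns $J$ is $p_J(v)=\frac{1}{n}\,|\{i\in[n]: M_{ij}=v_j \text{ for all } j\in J\}|$ for $v\in V_J$. The exposure of columns $J$ at threshold $t$ is \[ Q_J(t)=\sum_{v\in V_J} p_J(v)\,\mathbf 1[p_J(v)<t], \] i.e. the fraction of users whose restricted row (to columns $J$) is shared by fewer than $tn$ users. For a single column $j$, $Q_j:=Q_{\{j\}}$ and $p_j:=p_{\{j\}}$. *)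

theory Defs
  imports Complex_Main "HOL-Library.FuncSet"
begin

text \<open>A database: n rows (users) indexed by {..<n}, d columns (features) indexed by {..<d};
  M i j is the value of feature j for user i.\<close>

definition colvals :: "nat \<Rightarrow> (nat \<Rightarrow> nat \<Rightarrow> 'a) \<Rightarrow> nat \<Rightarrow> 'a set" where
  "colvals n M j = {M i j | i. i < n}"

definition prodvals :: "nat \<Rightarrow> (nat \<Rightarrow> nat \<Rightarrow> 'a) \<Rightarrow> nat set \<Rightarrow> (nat \<Rightarrow> 'a) set" where
  "prodvals n M J = PiE J (colvals n M)"

definition pJ :: "nat \<Rightarrow> (nat \<Rightarrow> nat \<Rightarrow> 'a) \<Rightarrow> nat set \<Rightarrow> (nat \<Rightarrow> 'a) \<Rightarrow> real" where
  "pJ n M J v = real (card {i. i < n \<and> (\<forall>j\<in>J. M i j = v j)}) / real n"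

definition QJ :: "nat \<Rightarrow> (nat \<Rightarrow> nat \<Rightarrow> 'a) \<Rightarrow> nat set \<Rightarrow> real \<Rightarrow> real" where
  "QJ n M J t = (\<Sum>v\<in>prodvals n M J. pJ n M J v * (if pJ n M J v < t then 1 else 0))"

end

theory Submission
  imports Defs
begin

definition rel :: "(nat \<Rightarrow> nat \<Rightarrow> 'a) \<Rightarrow> nat set \<Rightarrow> nat \<Rightarrow> nat \<Rightarrow> bool" where
  "rel M S i i' = (\<forall>j\<in>S. M i j = M i' j)"

definition cnt :: "nat \<Rightarrow> (nat \<Rightarrow> nat \<Rightarrow> 'a) \<Rightarrow> nat set \<Rightarrow> nat \<Rightarrow> nat" where
  "cnt n M S i = card {i'. i' < n \<and> rel M S i' i}"

definition Bad :: "nat \<Rightarrow> (nat \<Rightarrow> nat \<Rightarrow> 'a) \<Rightarrow> nat set \<Rightarrow> real \<Rightarrow> nat set" where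
  "Bad n M S T = {i. i < n \<and> real (cnt n M S i) < T * real n}"

lemma rel_sym: "rel M S i i' = rel M S i' i"
  unfolding rel_def by auto

lemma cnt_eq: "rel M S i i' \<Longrightarrow> cnt n M S i = cnt n M S i'"
  unfolding cnt_def rel_def by (rule arg_cong[where f=card]) auto

lemma cnt_pos: "i < n \<Longrightarrow> cnt n M S i \<ge> 1"
proof -
  assume "i < n"
  then have "i \<in> {i'. i' < n \<and> rel M S i' i}" by (simp add: rel_def)
  moreover have "finite {i'. i' < n \<and> rel M S i' i}" by simp
  ultimately show ?thesis unfolding cnt_def
    by (metis One_nat_def Suc_leI card_gt_0_iff empty_iff)
qed

lemma colvals_finite: "finite (colvals n M j)"
proof -
  have "colvals n M j = (\<lambda>i. M i j) ` {..<n}" unfolding colvals_def by auto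
  then show ?thesis by simp
qed

lemma QJ_nonneg: "QJ n M S T \<ge> 0"
  unfolding QJ_def pJ_def by (intro sum_nonneg) auto

lemma piece:
  fixes M :: "nat \<Rightarrow> nat \<Rightarrow> 'a" and S :: "nat set" and a n :: nat and t :: real
  assumes t: "t \<ge> 0" and i': "i' < n"
  defines "E \<equiv> {i. i < n \<and> real (cnt n M (insert a S) i) < t * real (cnt n M S i)}"
  shows "real (card {i\<in>E. rel M S i i'}) \<le> real (card (colvals n M a)) * (t * real (cnt n M S i'))"
proof -
  define A where "A x = {i\<in>E. rel M S i i' \<and> M i a = x}" for x
  have sub: "{i\<in>E. rel M S i i'} \<subseteq> (\<Union>x\<in>colvals n M a. A x)"
    unfolding A_def E_def colvals_def by auto
  have finA: "finite (A x)" for x unfolding A_def E_def by simp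
  have "card {i\<in>E. rel M S i i'} \<le> card (\<Union>x\<in>colvals n M a. A x)"
    by (intro card_mono finite_UN_I colvals_finite finA sub)
  also have "\<dots> \<le> (\<Sum>x\<in>colvals n M a. card (A x))"
    by (rule card_UN_le) (rule colvals_finite)
  finally have c1: "real (card {i\<in>E. rel M S i i'}) \<le> (\<Sum>x\<in>colvals n M a. real (card (A x)))"
    by (metis of_nat_le_iff of_nat_sum)
  have each: "real (card (A x)) \<le> t * real (cnt n M S i')" for x
  proof (cases "A x = {}")
    case True then show ?thesis using t by simp
  next
    case False
    then obtain i0 where i0: "i0 \<in> A x" by blast
    then have i0E: "i0 < n" "real (cnt n M (insert a S) i0) < t * real (cnt n M S i0)"
      "rel M S i0 i'" "M i0 a = x"
      unfolding A_def E_def by auto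
    have "A x \<subseteq> {i'. i' < n \<and> rel M (insert a S) i' i0}"
      using i0E unfolding A_def E_def rel_def by auto
    then have "card (A x) \<le> cnt n M (insert a S) i0"
      unfolding cnt_def by (intro card_mono) auto
    moreover have "cnt n M S i0 = cnt n M S i'" using cnt_eq i0E(3) by blast
    ultimately show ?thesis using i0E(2) by (metis less_eq_real_def of_nat_le_iff order_trans)
  qed
  have "(\<Sum>x\<in>colvals n M a. real (card (A x))) \<le> (\<Sum>x\<in>colvals n M a. t * real (cnt n M S i'))"
    by (rule sum_mono) (rule each)
  also have "\<dots> = real (card (colvals n M a)) * (t * real (cnt n M S i'))" by simp
  finally show ?thesis using c1 by linarith
qed

lemma count:
  fixes M :: "nat \<Rightarrow> nat \<Rightarrow> 'a" and S :: "nat set" and a n :: nat and t :: real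
  assumes t: "t \<ge> 0"
  defines "E \<equiv> {i. i < n \<and> real (cnt n M (insert a S) i) < t * real (cnt n M S i)}"
  shows "real (card E) \<le> t * real (card (colvals n M a)) * real n"
proof -
  have finE: "finite E" unfolding E_def by simp
  have E_sub: "E \<subseteq> {..<n}" unfolding E_def by auto
  have one: "1 = (\<Sum>i'<n. if rel M S i i' then 1 / real (cnt n M S i') else 0)" if "i < n" for i
  proof -
    have "(\<Sum>i'<n. if rel M S i i' then 1 / real (cnt n M S i') else (0::real))
        = (\<Sum>i'<n. if rel M S i' i then 1 / real (cnt n M S i) else 0)"
      by (intro sum.cong refl) (metis cnt_eq rel_sym)
    also have "\<dots> = (\<Sum>i'\<in>{i'. i' < n \<and> rel M S i' i}. 1 / real (cnt n M S i))"
      by (subst sum.inter_filter[symmetric]) (auto intro!: sum.cong simp: lessThan_def)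
    also have "\<dots> = real (cnt n M S i) * (1 / real (cnt n M S i))"
      by (simp add: cnt_def)
    also have "\<dots> = 1" using cnt_pos[OF that, of M S] by simp
    finally show ?thesis by simp
  qed
  have "real (card E) = (\<Sum>i\<in>E. (1::real))" by simp
  also have "\<dots> = (\<Sum>i\<in>E. \<Sum>i'<n. if rel M S i i' then 1 / real (cnt n M S i') else 0)"
    by (intro sum.cong refl one) (use E_sub in auto)
  also have "\<dots> = (\<Sum>i'<n. \<Sum>i\<in>E. if rel M S i i' then 1 / real (cnt n M S i') else 0)"
    by (rule sum.swap)
  also have "\<dots> = (\<Sum>i'<n. real (card {i\<in>E. rel M S i i'}) * (1 / real (cnt n M S i')))"
    by (intro sum.cong refl) (simp add: sum.inter_filter[symmetric] finE)
  also have "\<dots> \<le> (\<Sum>i'<n. (real (card (colvals n M a)) * (t * real (cnt n M S i'))) * (1 / real (cnt n M S i')))"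
    by (intro sum_mono mult_right_mono) (auto simp: piece[OF t, of _ n M a S, folded E_def])
  also have "\<dots> = (\<Sum>i'<n. real (card (colvals n M a)) * t)"
  proof (intro sum.cong refl)
    fix i' assume "i' \<in> {..<n}"
    then have "real (cnt n M S i') > 0" using cnt_pos[of i' n M S] by simp
    then show "real (card (colvals n M a)) * (t * real (cnt n M S i')) * (1 / real (cnt n M S i')) = real (card (colvals n M a)) * t"
      by (simp add: field_simps)
  qed
  also have "\<dots> = t * real (card (colvals n M a)) * real n" by simp
  finally show ?thesis .
qed

lemma Q_eq:
  assumes fin: "finite S"
  shows "QJ n M S T = real (card (Bad n M S T)) / real n"
proof (cases "n = 0")
  case True
  then show ?thesis unfolding QJ_def pJ_def Bad_def by simp
next
  case False
  then have np: "real n > 0" by simp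
  define cls where "cls v = {i. i < n \<and> (\<forall>j\<in>S. M i j = v j)}" for v
  define P' where "P' = {v\<in>prodvals n M S. real (card (cls v)) / real n < T}"
  have finP: "finite (prodvals n M S)" unfolding prodvals_def
    using fin colvals_finite by (intro finite_PiE) auto
  have cnt_cls: "cnt n M S i = card (cls v)" if "i \<in> cls v" for i v
    unfolding cnt_def cls_def using that by (intro arg_cong[where f=card]) (auto simp: rel_def cls_def)
  have Beq: "Bad n M S T = (\<Union>v\<in>P'. cls v)"
  proof
    show "Bad n M S T \<subseteq> (\<Union>v\<in>P'. cls v)"
    proof
      fix i assume iB: "i \<in> Bad n M S T"
      define v where "v = restrict (M i) S"
      have icl: "i \<in> cls v" using iB unfolding v_def cls_def Bad_def by auto
      have "v \<in> prodvals n M S" using iB unfolding v_def prodvals_def colvals_def Bad_def by auto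
      moreover have "real (card (cls v)) / real n < T"
        using iB cnt_cls[OF icl] np unfolding Bad_def by (simp add: divide_less_eq mult.commute)
      ultimately show "i \<in> (\<Union>v\<in>P'. cls v)" using icl unfolding P'_def by auto
    qed
  next
    show "(\<Union>v\<in>P'. cls v) \<subseteq> Bad n M S T"
    proof
      fix i assume "i \<in> (\<Union>v\<in>P'. cls v)"
      then obtain v where v: "v \<in> P'" "i \<in> cls v" by auto
      then show "i \<in> Bad n M S T"
        using cnt_cls[OF v(2)] np unfolding Bad_def P'_def
        by (auto simp: cls_def divide_less_eq mult.commute)
    qed
  qed
  have disj: "cls v \<inter> cls w = {}" if "v \<in> P'" "w \<in> P'" "v \<noteq> w" for v w
  proof (rule ccontr)
    assume "cls v \<inter> cls w \<noteq> {}"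
    then obtain i where "i \<in> cls v" "i \<in> cls w" by blast
    then have "\<forall>j\<in>S. v j = w j" unfolding cls_def by auto
    moreover have "v \<in> extensional S" "w \<in> extensional S"
      using that unfolding P'_def prodvals_def by (auto simp: PiE_def)
    ultimately have "v = w" by (metis extensionalityI)
    then show False using that by simp
  qed
  have "card (Bad n M S T) = (\<Sum>v\<in>P'. card (cls v))"
    unfolding Beq using finP disj by (intro card_UN_disjoint) (auto simp: P'_def cls_def)
  then have cB: "real (card (Bad n M S T)) / real n = (\<Sum>v\<in>P'. real (card (cls v)) / real n)"
    by (simp add: sum_divide_distrib)
  have "QJ n M S T = (\<Sum>v\<in>prodvals n M S. if real (card (cls v)) / real n < T then real (card (cls v)) / real n else 0)"
    unfolding QJ_def pJ_def cls_def by (intro sum.cong refl) auto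
  also have "\<dots> = (\<Sum>v\<in>P'. real (card (cls v)) / real n)"
    unfolding P'_def using finP by (simp add: sum.inter_filter)
  finally show ?thesis using cB by simp
qed

lemma ind:
  fixes M :: "nat \<Rightarrow> nat \<Rightarrow> 'a" and t :: "nat \<Rightarrow> real"
  assumes "finite R"
  shows "jstar \<notin> R \<Longrightarrow> (\<forall>j\<in>insert jstar R. t j \<ge> 0) \<Longrightarrow>
    real (card (Bad n M (insert jstar R) (\<Prod>j\<in>insert jstar R. t j)))
    \<le> real (card (Bad n M {jstar} (t jstar))) + (\<Sum>j\<in>R. t j * real (card (colvals n M j)) * real n)"
  using assms
proof (induction R rule: finite_induct)
  case empty
  then show ?case by simp
next
  case (insert a R)
  define S where "S = insert jstar R"
  define P where "P = (\<Prod>j\<in>S. t j)"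
  have aS: "a \<notin> S" using insert unfolding S_def by auto
  have finS: "finite S" using insert unfolding S_def by simp
  have ta: "t a \<ge> 0" using insert by auto
  have eqS: "insert jstar (insert a R) = insert a S" unfolding S_def by auto
  have prodeq: "(\<Prod>j\<in>insert a S. t j) = t a * P" unfolding P_def using aS finS by simp
  define E where "E = {i. i < n \<and> real (cnt n M (insert a S) i) < t a * real (cnt n M S i)}"
  have sub: "Bad n M (insert a S) (t a * P) \<subseteq> Bad n M S P \<union> E"
  proof
    fix i assume iB: "i \<in> Bad n M (insert a S) (t a * P)"
    show "i \<in> Bad n M S P \<union> E"
    proof (rule ccontr)
      assume "i \<notin> Bad n M S P \<union> E"
      then have h1: "real (cnt n M S i) \<ge> P * real n"
        and h2: "real (cnt n M (insert a S) i) \<ge> t a * real (cnt n M S i)"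
        using iB unfolding Bad_def E_def by auto
      have "t a * (P * real n) \<le> t a * real (cnt n M S i)" using h1 ta by (rule mult_left_mono)
      then have "real (cnt n M (insert a S) i) \<ge> t a * P * real n" using h2 by (simp add: mult.assoc)
      then show False using iB unfolding Bad_def by simp
    qed
  qed
  have "card (Bad n M (insert a S) (t a * P)) \<le> card (Bad n M S P \<union> E)"
    by (rule card_mono[OF _ sub]) (simp add: Bad_def E_def)
  also have "\<dots> \<le> card (Bad n M S P) + card E" by (rule card_Un_le)
  finally have c: "real (card (Bad n M (insert a S) (t a * P))) \<le> real (card (Bad n M S P)) + real (card E)"
    by linarith
  have cE: "real (card E) \<le> t a * real (card (colvals n M a)) * real n"
    unfolding E_def by (rule count[OF ta])
  have IH: "real (card (Bad n M S P)) \<le> real (card (Bad n M {jstar} (t jstar))) + (\<Sum>j\<in>R. t j * real (card (colvals n M j)) * real n)"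
    using insert unfolding S_def P_def by auto
  have "(\<Sum>j\<in>insert a R. t j * real (card (colvals n M j)) * real n) = t a * real (card (colvals n M a)) * real n + (\<Sum>j\<in>R. t j * real (card (colvals n M j)) * real n)"
    using insert by simp
  then show ?case unfolding eqS prodeq using c cE IH by linarith
qed

theorem theorem1:
  fixes n d :: nat and M :: "nat \<Rightarrow> nat \<Rightarrow> 'a" and J :: "nat set"
    and t :: "nat \<Rightarrow> real" and jstar :: nat
  assumes "J \<subseteq> {..<d}" and "J \<noteq> {}"
    and "\<forall>j\<in>J. 0 \<le> t j \<and> t j \<le> 1"
    and "jstar \<in> J"
  shows "QJ n M J (\<Prod>j\<in>J. t j)
    \<le> (\<Sum>j\<in>J. QJ n M {j} (t j))
       + (\<Sum>j\<in>J - {jstar}. t j * real (card (colvals n M j)))"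
proof -
  have finJ: "finite J" using assms(1) finite_subset by blast
  define R where "R = J - {jstar}"
  have JR: "J = insert jstar R" using assms(4) unfolding R_def by auto
  have finR: "finite R" using finJ unfolding R_def by simp
  have key: "real (card (Bad n M J (\<Prod>j\<in>J. t j)))
    \<le> real (card (Bad n M {jstar} (t jstar))) + (\<Sum>j\<in>R. t j * real (card (colvals n M j)) * real n)"
    unfolding JR using ind[OF finR, of jstar t n M] assms(3) JR unfolding R_def by auto
  have Qs: "QJ n M {jstar} (t jstar) \<le> (\<Sum>j\<in>J. QJ n M {j} (t j))"
    using member_le_sum[of jstar J "\<lambda>j. QJ n M {j} (t j)"] QJ_nonneg finJ assms(4) by auto
  have sum_nonneg': "(\<Sum>j\<in>R. t j * real (card (colvals n M j))) \<ge> 0"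
    using assms(3) unfolding R_def by (intro sum_nonneg) auto
  show ?thesis
  proof (cases "n = 0")
    case True
    then have "QJ n M J (\<Prod>j\<in>J. t j) = 0" by (simp add: Q_eq finJ)
    moreover have "(\<Sum>j\<in>J. QJ n M {j} (t j)) \<ge> 0" by (intro sum_nonneg QJ_nonneg)
    ultimately show ?thesis using sum_nonneg' unfolding R_def by linarith
  next
    case False
    then have np: "real n > 0" by simp
    have "QJ n M J (\<Prod>j\<in>J. t j) = real (card (Bad n M J (\<Prod>j\<in>J. t j))) / real n"
      by (rule Q_eq[OF finJ])
    also have "\<dots> \<le> (real (card (Bad n M {jstar} (t jstar))) + (\<Sum>j\<in>R. t j * real (card (colvals n M j)) * real n)) / real n"
      using key np by (simp add: divide_right_mono)
    also have "\<dots> = QJ n M {jstar} (t jstar) + (\<Sum>j\<in>R. t j * real (card (colvals n M j)))"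
      using np by (simp add: Q_eq add_divide_distrib sum_divide_distrib)
    finally show ?thesis using Qs unfolding R_def by linarith
  qed
qed

end
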